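(* A closed reversible reaction network $(X,\mathscr{R})$ is free of cornucopias and abysses if and only if it is conservative.
   Context: A reaction network (RN) $(X,\mathscr{R})$ consists of a finite non-empty set $X$ of species and a finite non-empty set $\mathscr{R}$ of reactions. Each reaction $r$ is given by stoichiometric coefficients $s^-_{xr},s^+_{xr}\in\mathbb{N}_0$. The stoichiometric matrix $S\in\mathbb{Z}^{X\times\mathscr{R}}$ has entries $S_{xr}=s^+_{xr}-s^-_{xr}$. The RN is closed if every reaction $r$ has some $x$ with $S_{xr}<0$ and some $y$ with $S_{yr}>0$. The reverse $\bar r$ of $r$ has $s^-_{x\bar r}=s^+_{xr}$ and $s^+_{x\bar r}=s^-_{xr}$. The RN is reversible if $r\in\mathscr{R}$ implies $\bar r\in\mathscr{R}$. For a real vector $w$: - $w>0$ means $w$ is componentwise non-negative and nonzero; - $w<0$ means $-w>0$; - $w\gg0$ means all entries are positive. A flow $v\in\mathbb{R}^{\mathscr{R}}$ with $v>0$ is a cornucopia if $Sv>0$, and an abyss if $Sv<0$. The RN is conservative if there is $m\in\mathbb{R}^X$ with $m\gg0$ and $m^\top S=0$. *)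

theory Defs
  imports Main "HOL-Analysis.Analysis"
begin

text \<open>A reaction network with finite nonempty species type 'x and finite nonempty
  reaction type 'r; reaction r has reactant coefficients sm x r and product
  coefficients sp x r.\<close>

definition stoich :: "('x \<Rightarrow> 'r \<Rightarrow> nat) \<Rightarrow> ('x \<Rightarrow> 'r \<Rightarrow> nat) \<Rightarrow> 'x \<Rightarrow> 'r \<Rightarrow> int" where
  "stoich sm sp x r = int (sp x r) - int (sm x r)"

definition closed_RN :: "('x \<Rightarrow> 'r \<Rightarrow> nat) \<Rightarrow> ('x \<Rightarrow> 'r \<Rightarrow> nat) \<Rightarrow> bool" where
  "closed_RN sm sp \<longleftrightarrow> (\<forall>r. (\<exists>x. stoich sm sp x r < 0) \<and> (\<exists>y. stoich sm sp y r > 0))"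

definition is_reverse :: "('x \<Rightarrow> 'r \<Rightarrow> nat) \<Rightarrow> ('x \<Rightarrow> 'r \<Rightarrow> nat) \<Rightarrow> 'r \<Rightarrow> 'r \<Rightarrow> bool" where
  "is_reverse sm sp r r' \<longleftrightarrow> (\<forall>x. sm x r' = sp x r \<and> sp x r' = sm x r)"

definition reversible_RN :: "('x \<Rightarrow> 'r \<Rightarrow> nat) \<Rightarrow> ('x \<Rightarrow> 'r \<Rightarrow> nat) \<Rightarrow> bool" where
  "reversible_RN sm sp \<longleftrightarrow> (\<forall>r. \<exists>r'. is_reverse sm sp r r')"

definition semipos :: "('a \<Rightarrow> real) \<Rightarrow> bool" where
  "semipos w \<longleftrightarrow> (\<forall>i. w i \<ge> 0) \<and> w \<noteq> (\<lambda>_. 0)"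

definition strictpos :: "('a \<Rightarrow> real) \<Rightarrow> bool" where
  "strictpos w \<longleftrightarrow> (\<forall>i. w i > 0)"

definition Smult :: "('x \<Rightarrow> 'r \<Rightarrow> nat) \<Rightarrow> ('x \<Rightarrow> 'r \<Rightarrow> nat) \<Rightarrow> ('r::finite \<Rightarrow> real) \<Rightarrow> 'x \<Rightarrow> real" where
  "Smult sm sp v x = (\<Sum>r\<in>UNIV. of_int (stoich sm sp x r) * v r)"

definition cornucopia :: "('x \<Rightarrow> 'r \<Rightarrow> nat) \<Rightarrow> ('x \<Rightarrow> 'r \<Rightarrow> nat) \<Rightarrow> ('r::finite \<Rightarrow> real) \<Rightarrow> bool" where
  "cornucopia sm sp v \<longleftrightarrow> semipos v \<and> semipos (Smult sm sp v)"

definition abyss :: "('x \<Rightarrow> 'r \<Rightarrow> nat) \<Rightarrow> ('x \<Rightarrow> 'r \<Rightarrow> nat) \<Rightarrow> ('r::finite \<Rightarrow> real) \<Rightarrow> bool" where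
  "abyss sm sp v \<longleftrightarrow> semipos v \<and> semipos (\<lambda>x. - Smult sm sp v x)"

definition conservative :: "('x::finite \<Rightarrow> 'r \<Rightarrow> nat) \<Rightarrow> ('x \<Rightarrow> 'r \<Rightarrow> nat) \<Rightarrow> bool" where
  "conservative sm sp \<longleftrightarrow> (\<exists>m :: 'x \<Rightarrow> real. strictpos m \<and>
      (\<forall>r. (\<Sum>x\<in>UNIV. m x * of_int (stoich sm sp x r)) = 0))"

end

theory Submission
  imports Defs "HOL-Analysis.Analysis"
begin

lemma stoich_rev:
  assumes "is_reverse sm sp r r'"
  shows "stoich sm sp x r' = - stoich sm sp x r"
  using assms unfolding is_reverse_def stoich_def by simp

lemma cons_no_corn:
  fixes sm sp :: "'x::finite \<Rightarrow> 'r::finite \<Rightarrow> nat"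
  assumes m: "strictpos m" and mS: "\<forall>r. (\<Sum>x\<in>UNIV. m x * of_int (stoich sm sp x r)) = 0"
    and sp: "semipos (\<lambda>x. c * Smult sm sp v x)"
  shows False
proof -
  have "(\<Sum>x\<in>UNIV. m x * (c * Smult sm sp v x)) = c * (\<Sum>r\<in>UNIV. v r * (\<Sum>x\<in>UNIV. m x * of_int (stoich sm sp x r)))"
    unfolding Smult_def
    by (simp add: sum_distrib_left sum_distrib_right mult_ac sum.swap[of _ "UNIV::'x set"])
  also have "\<dots> = 0" using mS by simp
  finally have z: "(\<Sum>x\<in>UNIV. m x * (c * Smult sm sp v x)) = 0" .
  from sp obtain x0 where "c * Smult sm sp v x0 \<noteq> 0" unfolding semipos_def by (auto simp: fun_eq_iff)
  with sp have x0: "c * Smult sm sp v x0 > 0" unfolding semipos_def by (metis less_eq_real_def)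
  have "0 < (\<Sum>x\<in>UNIV. m x * (c * Smult sm sp v x))"
    apply (rule sum_pos2[where i=x0])
    using x0 m sp unfolding strictpos_def semipos_def by (auto intro: mult_nonneg_nonneg less_imp_le)
  with z show False by simp
qed

theorem theorem4:
  fixes sm sp :: "'x::finite \<Rightarrow> 'r::finite \<Rightarrow> nat"
  assumes "closed_RN sm sp"
    and "reversible_RN sm sp"
  shows "((\<nexists>v. cornucopia sm sp v) \<and> (\<nexists>v. abyss sm sp v)) \<longleftrightarrow> conservative sm sp"
proof
  assume "conservative sm sp"
  then obtain m where m: "strictpos m" and mS: "\<forall>r. (\<Sum>x\<in>UNIV. m x * of_int (stoich sm sp x r)) = 0"
    unfolding conservative_def by blast
  show "(\<nexists>v. cornucopia sm sp v) \<and> (\<nexists>v. abyss sm sp v)"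
  proof (intro conjI notI; elim exE)
    fix v assume "cornucopia sm sp v"
    then have "semipos (\<lambda>x. 1 * Smult sm sp v x)" unfolding cornucopia_def by simp
    then show False using cons_no_corn[OF m mS] by blast
  next
    fix v assume "abyss sm sp v"
    then have "semipos (\<lambda>x. (-1) * Smult sm sp v x)" unfolding abyss_def by simp
    then show False using cons_no_corn[OF m mS] by blast
  qed
next
  assume "(\<nexists>v. cornucopia sm sp v) \<and> (\<nexists>v. abyss sm sp v)"
  then have nc: "\<And>v. \<not> cornucopia sm sp v" by blast
  define S where "S x r = real_of_int (stoich sm sp x r)" for x r
  define f :: "real^'r \<Rightarrow> real^'x" where "f v = (\<chi> x. \<Sum>r\<in>UNIV. S x r * v $ r)" for v
  define K :: "(real^'x) set" where "K = convex hull (range (\<lambda>i. axis i 1))"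
  have lin: "linear f"
    unfolding linear_iff f_def
    by (auto simp: vec_eq_iff sum.distrib sum_distrib_left algebra_simps)
  have sub: "subspace (range f)" by (rule linear_subspace_image[OF lin subspace_UNIV])
  have Kc: "compact K" unfolding K_def by (rule finite_imp_compact_convex_hull) simp
  have Kv: "convex K" unfolding K_def by simp
  have Kne: "K \<noteq> {}" unfolding K_def by simp
  have Kin: "axis i 1 \<in> K" for i unfolding K_def by (rule hull_inc) simp
  have Ksub: "K \<subseteq> {y. (\<forall>i. y $ i \<ge> 0) \<and> (\<Sum>i\<in>UNIV. y $ i) = 1}"
    unfolding K_def
  proof (rule hull_minimal)
    show "range (\<lambda>i. axis i 1) \<subseteq> {y::real^'x. (\<forall>i. y $ i \<ge> 0) \<and> (\<Sum>i\<in>UNIV. y $ i) = 1}"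
      by (auto simp: axis_def)
    show "convex {y::real^'x. (\<forall>i. y $ i \<ge> 0) \<and> (\<Sum>i\<in>UNIV. y $ i) = 1}"
      unfolding convex_def by (auto simp: sum.distrib sum_distrib_left[symmetric])
  qed
  have disj: "K \<inter> range f = {}"
  proof (rule ccontr)
    assume "K \<inter> range f \<noteq> {}"
    then obtain y v where yK: "y \<in> K" and yv: "y = f v" by blast
    from yK Ksub have ynn: "\<And>i. y $ i \<ge> 0" and ys: "(\<Sum>i\<in>UNIV. y $ i) = 1" by auto
    define \<rho> where "\<rho> r = (SOME r'. is_reverse sm sp r r')" for r
    have rho: "is_reverse sm sp r (\<rho> r)" for r
      unfolding \<rho>_def using assms(2) unfolding reversible_RN_def by (metis someI_ex)
    have Srho: "S x (\<rho> r) = - S x r" for x r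
      unfolding S_def using stoich_rev[OF rho] by simp
    define ps where "ps t = max t (0::real)" for t
    define ng where "ng t = max (-t) (0::real)" for t
    define w where "w r = ps (v $ r) + (\<Sum>r'\<in>UNIV. if \<rho> r' = r then ng (v $ r') else 0)" for r
    have wnn: "w r \<ge> 0" for r
      unfolding w_def ps_def ng_def by (auto intro!: add_nonneg_nonneg sum_nonneg)
    have Sw: "Smult sm sp w x = y $ x" for x
    proof -
      have A: "(\<Sum>r\<in>UNIV. S x r * (\<Sum>r'\<in>UNIV. if \<rho> r' = r then ng (v $ r') else 0))
           = (\<Sum>r'\<in>UNIV. \<Sum>r\<in>UNIV. if \<rho> r' = r then S x r * ng (v $ r') else 0)"
        by (subst sum.swap) (auto simp: sum_distrib_left intro!: sum.cong)
      also have "\<dots> = (\<Sum>r'\<in>UNIV. S x (\<rho> r') * ng (v $ r'))"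
        by (simp add: sum.delta)
      also have "\<dots> = - (\<Sum>r'\<in>UNIV. S x r' * ng (v $ r'))"
        by (simp add: Srho sum_negf)
      finally have A': "(\<Sum>r\<in>UNIV. S x r * (\<Sum>r'\<in>UNIV. if \<rho> r' = r then ng (v $ r') else 0)) = - (\<Sum>r'\<in>UNIV. S x r' * ng (v $ r'))" .
      have "Smult sm sp w x = (\<Sum>r\<in>UNIV. S x r * ps (v $ r)) + (\<Sum>r\<in>UNIV. S x r * (\<Sum>r'\<in>UNIV. if \<rho> r' = r then ng (v $ r') else 0))"
        unfolding Smult_def w_def S_def by (simp add: distrib_left sum.distrib)
      also have "\<dots> = (\<Sum>r\<in>UNIV. S x r * (ps (v $ r) - ng (v $ r)))"
        unfolding A' by (simp add: right_diff_distrib sum_subtractf)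
      also have "\<dots> = (\<Sum>r\<in>UNIV. S x r * v $ r)"
        unfolding ps_def ng_def by (intro sum.cong) (auto simp: max_def)
      finally show ?thesis unfolding yv f_def by simp
    qed
    have ynz: "(\<lambda>x. y $ x) \<noteq> (\<lambda>_. 0)" using ys by auto
    have "cornucopia sm sp w"
      unfolding cornucopia_def semipos_def
    proof (intro conjI)
      show "\<forall>i. 0 \<le> w i" using wnn by blast
      show "\<forall>i. 0 \<le> Smult sm sp w i" using Sw ynn by simp
      have "Smult sm sp w = (\<lambda>x. y $ x)" using Sw by auto
      then show "Smult sm sp w \<noteq> (\<lambda>_. 0)" using ynz by simp
      show "w \<noteq> (\<lambda>_. 0)"
      proof
        assume "w = (\<lambda>_. 0)"
        then have "Smult sm sp w = (\<lambda>_. 0)" unfolding Smult_def by simp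
        then show False using \<open>Smult sm sp w = (\<lambda>x. y $ x)\<close> ynz by simp
      qed
    qed
    with nc show False by blast
  qed
  obtain a b where aK: "\<forall>k\<in>K. inner a k < b" and aL: "\<forall>l\<in>range f. inner a l > b"
    using separating_hyperplane_compact_closed[OF Kv Kc Kne subspace_imp_convex[OF sub] closed_subspace[OF sub] disj]
    by blast
  have "f 0 = 0" using linear_0[OF lin] .
  then have "0 \<in> range f" by (metis rangeI)
  then have "b < inner a 0" using aL by blast
  then have b0: "b < 0" by simp
  have a0: "inner a l = 0" if l: "l \<in> range f" for l
  proof (rule ccontr)
    assume ne: "inner a l \<noteq> 0"
    have "((b - 1) / inner a l) *\<^sub>R l \<in> range f" using sub l by (rule subspace_scale)
    moreover have "inner a (((b - 1) / inner a l) *\<^sub>R l) = b - 1" using ne by simp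
    ultimately have "b < b - 1" using aL by metis
    then show False by simp
  qed
  show "conservative sm sp"
    unfolding conservative_def
  proof (intro exI[of _ "\<lambda>x. - (a $ x)"] conjI allI)
    show "strictpos (\<lambda>x. - a $ x)"
      unfolding strictpos_def
    proof
      fix i
      have "inner a (axis i 1) < b" using aK Kin by blast
      then show "0 < - a $ i" using b0 by (simp add: inner_axis)
    qed
    fix r
    have fa: "f (axis r 1) $ x = S x r" for x
      unfolding f_def by (simp add: axis_def if_distrib cong: if_cong)
    have "inner a (f (axis r 1)) = 0" using a0 by blast
    then have "(\<Sum>x\<in>UNIV. a $ x * S x r) = 0" unfolding inner_vec_def fa by simp
    then show "(\<Sum>x\<in>UNIV. - a $ x * real_of_int (stoich sm sp x r)) = 0"
      unfolding S_def by (simp add: sum_negf)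
  qed
qed

end
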